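(* Let $\mathcal T\subseteq\mathcal C$ be a self-orthogonal subcategory closed under direct summands, let $n\ge0$, and let $X\in\mathcal X_{\mathcal T}$. The following are equivalent: (1) $X\in\check{\mathcal T}_n$; (2) $\mathbb E^{n+1}(Y,X)=0$ for all $Y\in{}^{\perp}\mathcal T$; (3) $\mathbb E^{n+1}(Y,X)=0$ for all $Y\in\mathcal X_{\mathcal T}$.
   Context: $(\mathcal C,\mathbb E,\mathfrak s)$ is an extriangulated category in the sense of Nakaoka–Palu, Krull–Schmidt, with enough projectives and enough injectives; subcategories are full, additive, closed under isomorphisms. Higher extensions: $\mathbb E^1=\mathbb E$, $\mathbb E^{i+1}(X,Y)=\mathbb E(\Omega^iX,Y)\cong\mathbb E(X,\Sigma^iY)$ (syzygies/cosyzygies via projective/injective $\mathbb E$-triangles). $\mathcal T$ is self-orthogonal if $\mathbb E^i(T_1,T_2)=0$ for all $i\ge1$, $T_1,T_2\in\mathcal T$. ${}^{\perp}\mathcal T=\{Y:\mathbb E^i(Y,T)=0\ \forall i\ge1,\forall T\in\mathcal T\}$. $\check{\mathcal T}_n$ is the subcategory of objects $A$ for which there exist $\mathbb E$-triangles $K_i\to T_i\to K_{i+1}\dashrightarrow$ ($0\le i\le n-1$) with $K_0=A$, all $T_i\in\mathcal T$ and $K_n\in\mathcal T$. $\mathcal X_{\mathcal T}$ is the subcategory of objects $A$ for which there exist $\mathbb E$-triangles $K_i\to T_i\to K_{i+1}\dashrightarrow$ for all $i\ge0$ with $K_0=A$, $T_i\in\mathcal T$ and $K_{i+1}\in{}^{\perp}\mathcal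 T$ for all $i$. *)

theory Defs
  imports Main
begin

text \<open>An extriangulated category (Nakaoka--Palu) encoded as a record.
  Hom C A B is the hom-set from A to B; cmp C g f is the composite g after f.
  Ex C D A is the extension group E(D,A) (contravariant in D, covariant in A);
  push C a d is a_* d, pull C c d is c^* d;
  rea C d x y means that the sequence A -x-> B -y-> D belongs to the
  equivalence class s(d).\<close>

record ('o,'m,'e) extri_cat =
  Ob :: "'o set"
  Hom :: "'o \<Rightarrow> 'o \<Rightarrow> 'm set"
  cmp :: "'m \<Rightarrow> 'm \<Rightarrow> 'm"
  idm :: "'o \<Rightarrow> 'm"
  madd :: "'m \<Rightarrow> 'm \<Rightarrow> 'm"
  mneg :: "'m \<Rightarrow> 'm"
  mzero :: "'o \<Rightarrow> 'o \<Rightarrow> 'm"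
  Ex :: "'o \<Rightarrow> 'o \<Rightarrow> 'e set"
  eadd :: "'e \<Rightarrow> 'e \<Rightarrow> 'e"
  eneg :: "'e \<Rightarrow> 'e"
  ezero :: "'o \<Rightarrow> 'o \<Rightarrow> 'e"
  push :: "'m \<Rightarrow> 'e \<Rightarrow> 'e"
  pull :: "'m \<Rightarrow> 'e \<Rightarrow> 'e"
  rea :: "'e \<Rightarrow> 'm \<Rightarrow> 'm \<Rightarrow> bool"

definition ab_group_on :: "'a set \<Rightarrow> ('a \<Rightarrow> 'a \<Rightarrow> 'a) \<Rightarrow> ('a \<Rightarrow> 'a) \<Rightarrow> 'a \<Rightarrow> bool" where
  "ab_group_on S add neg z \<longleftrightarrow> z \<in> S \<and> (\<forall>a\<in>S. \<forall>b\<in>S. add a b \<in> S) \<and> (\<forall>a\<in>S. neg a \<in> S)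
     \<and> (\<forall>a\<in>S. \<forall>b\<in>S. \<forall>c\<in>S. add (add a b) c = add a (add b c))
     \<and> (\<forall>a\<in>S. \<forall>b\<in>S. add a b = add b a) \<and> (\<forall>a\<in>S. add z a = a) \<and> (\<forall>a\<in>S. add (neg a) a = z)"

definition is_category :: "('o,'m,'e) extri_cat \<Rightarrow> bool" where
  "is_category C \<longleftrightarrow>
     (\<forall>A B. (A \<notin> Ob C \<or> B \<notin> Ob C) \<longrightarrow> Hom C A B = {})
   \<and> (\<forall>A B A' B'. (A, B) \<noteq> (A', B') \<longrightarrow> Hom C A B \<inter> Hom C A' B' = {})
   \<and> (\<forall>A\<in>Ob C. idm C A \<in> Hom C A A)
   \<and> (\<forall>A B D f g. f \<in> Hom C A B \<longrightarrow> g \<in> Hom C B D \<longrightarrow> cmp C g f \<in> Hom C A D)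
   \<and> (\<forall>A B D F f g h. f \<in> Hom C A B \<longrightarrow> g \<in> Hom C B D \<longrightarrow> h \<in> Hom C D F \<longrightarrow>
        cmp C h (cmp C g f) = cmp C (cmp C h g) f)
   \<and> (\<forall>A B f. f \<in> Hom C A B \<longrightarrow> cmp C f (idm C A) = f \<and> cmp C (idm C B) f = f)"

definition is_iso :: "('o,'m,'e) extri_cat \<Rightarrow> 'o \<Rightarrow> 'o \<Rightarrow> 'm \<Rightarrow> bool" where
  "is_iso C A B f \<longleftrightarrow> f \<in> Hom C A B \<and>
     (\<exists>g\<in>Hom C B A. cmp C g f = idm C A \<and> cmp C f g = idm C B)"

definition is_biproduct :: "('o,'m,'e) extri_cat \<Rightarrow> 'o \<Rightarrow> 'o \<Rightarrow> 'o \<Rightarrow> 'm \<Rightarrow> 'm \<Rightarrow> 'm \<Rightarrow> 'm \<Rightarrow> bool" where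
  "is_biproduct C A B P p1 p2 i1 i2 \<longleftrightarrow> P \<in> Ob C \<and>
     p1 \<in> Hom C P A \<and> p2 \<in> Hom C P B \<and> i1 \<in> Hom C A P \<and> i2 \<in> Hom C B P
   \<and> cmp C p1 i1 = idm C A \<and> cmp C p2 i2 = idm C B
   \<and> cmp C p1 i2 = mzero C B A \<and> cmp C p2 i1 = mzero C A B
   \<and> madd C (cmp C i1 p1) (cmp C i2 p2) = idm C P"

definition is_zero_obj :: "('o,'m,'e) extri_cat \<Rightarrow> 'o \<Rightarrow> bool" where
  "is_zero_obj C Z \<longleftrightarrow> Z \<in> Ob C \<and> idm C Z = mzero C Z Z"

definition is_additive :: "('o,'m,'e) extri_cat \<Rightarrow> bool" where
  "is_additive C \<longleftrightarrow>
     (\<forall>A\<in>Ob C. \<forall>B\<in>Ob C. ab_group_on (Hom C A B) (madd C) (mneg C) (mzero C A B))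
   \<and> (\<forall>A B D f f' g. f \<in> Hom C A B \<longrightarrow> f' \<in> Hom C A B \<longrightarrow> g \<in> Hom C B D \<longrightarrow>
        cmp C g (madd C f f') = madd C (cmp C g f) (cmp C g f'))
   \<and> (\<forall>A B D f g g'. f \<in> Hom C A B \<longrightarrow> g \<in> Hom C B D \<longrightarrow> g' \<in> Hom C B D \<longrightarrow>
        cmp C (madd C g g') f = madd C (cmp C g f) (cmp C g' f))
   \<and> (\<exists>Z. is_zero_obj C Z)
   \<and> (\<forall>A\<in>Ob C. \<forall>B\<in>Ob C. \<exists>P p1 p2 i1 i2. is_biproduct C A B P p1 p2 i1 i2)"

definition ET1 :: "('o,'m,'e) extri_cat \<Rightarrow> bool" where
  "ET1 C \<longleftrightarrow>
     (\<forall>D A. (D \<notin> Ob C \<or> A \<notin> Ob C) \<longrightarrow> Ex C D A = {})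
   \<and> (\<forall>D A D' A'. (D, A) \<noteq> (D', A') \<longrightarrow> Ex C D A \<inter> Ex C D' A' = {})
   \<and> (\<forall>D\<in>Ob C. \<forall>A\<in>Ob C. ab_group_on (Ex C D A) (eadd C) (eneg C) (ezero C D A))
   \<and> (\<forall>A A' D a d. a \<in> Hom C A A' \<longrightarrow> d \<in> Ex C D A \<longrightarrow> push C a d \<in> Ex C D A')
   \<and> (\<forall>A D D' c d. c \<in> Hom C D' D \<longrightarrow> d \<in> Ex C D A \<longrightarrow> pull C c d \<in> Ex C D' A)
   \<and> (\<forall>A D d. d \<in> Ex C D A \<longrightarrow> push C (idm C A) d = d \<and> pull C (idm C D) d = d)
   \<and> (\<forall>A A' A'' D a a' d. a \<in> Hom C A A' \<longrightarrow> a' \<in> Hom C A' A'' \<longrightarrow> d \<in> Ex C D A \<longrightarrow>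
        push C (cmp C a' a) d = push C a' (push C a d))
   \<and> (\<forall>A D D' D'' c c' d. c \<in> Hom C D' D \<longrightarrow> c' \<in> Hom C D'' D' \<longrightarrow> d \<in> Ex C D A \<longrightarrow>
        pull C (cmp C c c') d = pull C c' (pull C c d))
   \<and> (\<forall>A A' D D' a c d. a \<in> Hom C A A' \<longrightarrow> c \<in> Hom C D' D \<longrightarrow> d \<in> Ex C D A \<longrightarrow>
        push C a (pull C c d) = pull C c (push C a d))
   \<and> (\<forall>A A' D a d d'. a \<in> Hom C A A' \<longrightarrow> d \<in> Ex C D A \<longrightarrow> d' \<in> Ex C D A \<longrightarrow>
        push C a (eadd C d d') = eadd C (push C a d) (push C a d'))
   \<and> (\<forall>A D D' c d d'. c \<in> Hom C D' D \<longrightarrow> d \<in> Ex C D A \<longrightarrow> d' \<in> Ex C D A \<longrightarrow>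
        pull C c (eadd C d d') = eadd C (pull C c d) (pull C c d'))
   \<and> (\<forall>A A' D a a' d. a \<in> Hom C A A' \<longrightarrow> a' \<in> Hom C A A' \<longrightarrow> d \<in> Ex C D A \<longrightarrow>
        push C (madd C a a') d = eadd C (push C a d) (push C a' d))
   \<and> (\<forall>A D D' c c' d. c \<in> Hom C D' D \<longrightarrow> c' \<in> Hom C D' D \<longrightarrow> d \<in> Ex C D A \<longrightarrow>
        pull C (madd C c c') d = eadd C (pull C c d) (pull C c' d))"

definition equiv_seq :: "('o,'m,'e) extri_cat \<Rightarrow> 'o \<Rightarrow> 'o \<Rightarrow> 'm \<Rightarrow> 'm \<Rightarrow> 'm \<Rightarrow> 'm \<Rightarrow> bool" where
  "equiv_seq C B B' x y x' y' \<longleftrightarrow> (\<exists>b. is_iso C B B' b \<and> cmp C b x = x' \<and> cmp C y' b = y)"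

definition ET2 :: "('o,'m,'e) extri_cat \<Rightarrow> bool" where
  "ET2 C \<longleftrightarrow>
     (\<forall>d x y. rea C d x y \<longrightarrow> (\<exists>A B D. d \<in> Ex C D A \<and> x \<in> Hom C A B \<and> y \<in> Hom C B D))
   \<and> (\<forall>A D d. d \<in> Ex C D A \<longrightarrow> (\<exists>B x y. x \<in> Hom C A B \<and> y \<in> Hom C B D \<and> rea C d x y))
   \<and> (\<forall>A B B' D d x y x' y'. d \<in> Ex C D A \<longrightarrow> x \<in> Hom C A B \<longrightarrow> y \<in> Hom C B D \<longrightarrow> rea C d x y \<longrightarrow>
        x' \<in> Hom C A B' \<longrightarrow> y' \<in> Hom C B' D \<longrightarrow> (rea C d x' y' \<longleftrightarrow> equiv_seq C B B' x y x' y'))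
   \<and> (\<forall>A B D A' B' D' d d' x y x' y' a c.
        d \<in> Ex C D A \<longrightarrow> d' \<in> Ex C D' A' \<longrightarrow> x \<in> Hom C A B \<longrightarrow> y \<in> Hom C B D \<longrightarrow>
        x' \<in> Hom C A' B' \<longrightarrow> y' \<in> Hom C B' D' \<longrightarrow> rea C d x y \<longrightarrow> rea C d' x' y' \<longrightarrow>
        a \<in> Hom C A A' \<longrightarrow> c \<in> Hom C D D' \<longrightarrow> push C a d = pull C c d' \<longrightarrow>
        (\<exists>b\<in>Hom C B B'. cmp C b x = cmp C x' a \<and> cmp C c y = cmp C y' b))
   \<and> (\<forall>A D P p1 p2 i1 i2. is_biproduct C A D P p1 p2 i1 i2 \<longrightarrow> rea C (ezero C D A) i1 p2)
   \<and> (\<forall>A B D A' B' D' d d' x y x' y' PA pA1 pA2 iA1 iA2 PB pB1 pB2 iB1 iB2 PD pD1 pD2 iD1 iD2 e.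
        d \<in> Ex C D A \<longrightarrow> d' \<in> Ex C D' A' \<longrightarrow> x \<in> Hom C A B \<longrightarrow> y \<in> Hom C B D \<longrightarrow>
        x' \<in> Hom C A' B' \<longrightarrow> y' \<in> Hom C B' D' \<longrightarrow> rea C d x y \<longrightarrow> rea C d' x' y' \<longrightarrow>
        is_biproduct C A A' PA pA1 pA2 iA1 iA2 \<longrightarrow> is_biproduct C B B' PB pB1 pB2 iB1 iB2 \<longrightarrow>
        is_biproduct C D D' PD pD1 pD2 iD1 iD2 \<longrightarrow> e \<in> Ex C PD PA \<longrightarrow>
        push C pA1 (pull C iD1 e) = d \<longrightarrow> push C pA1 (pull C iD2 e) = ezero C D' A \<longrightarrow>
        push C pA2 (pull C iD1 e) = ezero C D A' \<longrightarrow> push C pA2 (pull C iD2 e) = d' \<longrightarrow>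
        rea C e (madd C (cmp C iB1 (cmp C x pA1)) (cmp C iB2 (cmp C x' pA2)))
                (madd C (cmp C iD1 (cmp C y pB1)) (cmp C iD2 (cmp C y' pB2))))"

definition ET3 :: "('o,'m,'e) extri_cat \<Rightarrow> bool" where
  "ET3 C \<longleftrightarrow>
     (\<forall>A B D A' B' D' d d' x y x' y' a b.
        d \<in> Ex C D A \<longrightarrow> d' \<in> Ex C D' A' \<longrightarrow> x \<in> Hom C A B \<longrightarrow> y \<in> Hom C B D \<longrightarrow>
        x' \<in> Hom C A' B' \<longrightarrow> y' \<in> Hom C B' D' \<longrightarrow> rea C d x y \<longrightarrow> rea C d' x' y' \<longrightarrow>
        a \<in> Hom C A A' \<longrightarrow> b \<in> Hom C B B' \<longrightarrow> cmp C b x = cmp C x' a \<longrightarrow>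
        (\<exists>c\<in>Hom C D D'. cmp C c y = cmp C y' b \<and> push C a d = pull C c d'))"

definition ET3op :: "('o,'m,'e) extri_cat \<Rightarrow> bool" where
  "ET3op C \<longleftrightarrow>
     (\<forall>A B D A' B' D' d d' x y x' y' b c.
        d \<in> Ex C D A \<longrightarrow> d' \<in> Ex C D' A' \<longrightarrow> x \<in> Hom C A B \<longrightarrow> y \<in> Hom C B D \<longrightarrow>
        x' \<in> Hom C A' B' \<longrightarrow> y' \<in> Hom C B' D' \<longrightarrow> rea C d x y \<longrightarrow> rea C d' x' y' \<longrightarrow>
        b \<in> Hom C B B' \<longrightarrow> c \<in> Hom C D D' \<longrightarrow> cmp C c y = cmp C y' b \<longrightarrow>
        (\<exists>a\<in>Hom C A A'. cmp C b x = cmp C x' a \<and> push C a d = pull C c d'))"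

definition ET4 :: "('o,'m,'e) extri_cat \<Rightarrow> bool" where
  "ET4 C \<longleftrightarrow>
     (\<forall>A B D F G d d' f f' g g'.
        d \<in> Ex C D A \<longrightarrow> f \<in> Hom C A B \<longrightarrow> f' \<in> Hom C B D \<longrightarrow> rea C d f f' \<longrightarrow>
        d' \<in> Ex C F B \<longrightarrow> g \<in> Hom C B G \<longrightarrow> g' \<in> Hom C G F \<longrightarrow> rea C d' g g' \<longrightarrow>
        (\<exists>E h' dd e d''. h' \<in> Hom C G E \<and> dd \<in> Hom C D E \<and> e \<in> Hom C E F \<and> d'' \<in> Ex C E A
           \<and> rea C d'' (cmp C g f) h'
           \<and> cmp C dd f' = cmp C h' g \<and> cmp C e h' = g'
           \<and> rea C (push C f' d') dd e
           \<and> pull C dd d'' = d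
           \<and> push C f d'' = pull C e d'))"

definition ET4op :: "('o,'m,'e) extri_cat \<Rightarrow> bool" where
  "ET4op C \<longleftrightarrow>
     (\<forall>A B D F G d d' f f' g g'.
        d \<in> Ex C D A \<longrightarrow> f \<in> Hom C A B \<longrightarrow> f' \<in> Hom C B D \<longrightarrow> rea C d f f' \<longrightarrow>
        d' \<in> Ex C B F \<longrightarrow> g \<in> Hom C F G \<longrightarrow> g' \<in> Hom C G B \<longrightarrow> rea C d' g g' \<longrightarrow>
        (\<exists>E h dd e d''. h \<in> Hom C E G \<and> dd \<in> Hom C F E \<and> e \<in> Hom C E A \<and> d'' \<in> Ex C D E
           \<and> rea C d'' h (cmp C f' g')
           \<and> cmp C h dd = g \<and> cmp C f e = cmp C g' h
           \<and> rea C (pull C f d') dd e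
           \<and> push C e d'' = d
           \<and> push C dd d' = pull C f' d''))"

definition extriangulated :: "('o,'m,'e) extri_cat \<Rightarrow> bool" where
  "extriangulated C \<longleftrightarrow> is_category C \<and> is_additive C \<and> ET1 C \<and> ET2 C \<and> ET3 C \<and> ET3op C
     \<and> ET4 C \<and> ET4op C"

text \<open>Krull--Schmidt: every object is a finite direct sum of objects with local
  endomorphism rings (a ring is local iff it is nonzero and for every r, r or 1-r is a unit).\<close>
definition local_obj :: "('o,'m,'e) extri_cat \<Rightarrow> 'o \<Rightarrow> bool" where
  "local_obj C A \<longleftrightarrow> A \<in> Ob C \<and> idm C A \<noteq> mzero C A A \<and>
     (\<forall>f\<in>Hom C A A. is_iso C A A f \<or> is_iso C A A (madd C (idm C A) (mneg C f)))"

definition krull_schmidt :: "('o,'m,'e) extri_cat \<Rightarrow> bool" where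
  "krull_schmidt C \<longleftrightarrow> (\<forall>X\<in>Ob C. \<exists>(n::nat) As \<iota> \<pi>.
     (\<forall>k<n. local_obj C (As k) \<and> \<iota> k \<in> Hom C (As k) X \<and> \<pi> k \<in> Hom C X (As k))
   \<and> (\<forall>k<n. \<forall>l<n. cmp C (\<pi> k) (\<iota> l) = (if k = l then idm C (As k) else mzero C (As l) (As k)))
   \<and> foldr (\<lambda>k acc. madd C (cmp C (\<iota> k) (\<pi> k)) acc) [0..<n] (mzero C X X) = idm C X)"

definition etri :: "('o,'m,'e) extri_cat \<Rightarrow> 'o \<Rightarrow> 'o \<Rightarrow> 'o \<Rightarrow> bool" where
  "etri C A B D \<longleftrightarrow> (\<exists>x y d. d \<in> Ex C D A \<and> x \<in> Hom C A B \<and> y \<in> Hom C B D \<and> rea C d x y)"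

definition projective :: "('o,'m,'e) extri_cat \<Rightarrow> 'o \<Rightarrow> bool" where
  "projective C P \<longleftrightarrow> P \<in> Ob C \<and> (\<forall>A B D x y d c. d \<in> Ex C D A \<longrightarrow> x \<in> Hom C A B \<longrightarrow>
     y \<in> Hom C B D \<longrightarrow> rea C d x y \<longrightarrow> c \<in> Hom C P D \<longrightarrow> (\<exists>b\<in>Hom C P B. cmp C y b = c))"

definition injective :: "('o,'m,'e) extri_cat \<Rightarrow> 'o \<Rightarrow> bool" where
  "injective C I \<longleftrightarrow> I \<in> Ob C \<and> (\<forall>A B D x y d a. d \<in> Ex C D A \<longrightarrow> x \<in> Hom C A B \<longrightarrow>
     y \<in> Hom C B D \<longrightarrow> rea C d x y \<longrightarrow> a \<in> Hom C A I \<longrightarrow> (\<exists>b\<in>Hom C B I. cmp C b x = a))"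

definition enough_projectives :: "('o,'m,'e) extri_cat \<Rightarrow> bool" where
  "enough_projectives C \<longleftrightarrow> (\<forall>D\<in>Ob C. \<exists>A P. projective C P \<and> etri C A P D)"

definition enough_injectives :: "('o,'m,'e) extri_cat \<Rightarrow> bool" where
  "enough_injectives C \<longleftrightarrow> (\<forall>A\<in>Ob C. \<exists>I D. injective C I \<and> etri C A I D)"

inductive syz :: "('o,'m,'e) extri_cat \<Rightarrow> nat \<Rightarrow> 'o \<Rightarrow> 'o \<Rightarrow> bool" for C where
  syz0: "X \<in> Ob C \<Longrightarrow> syz C 0 X X"
| syzS: "syz C i X Z \<Longrightarrow> projective C P \<Longrightarrow> etri C W P Z \<Longrightarrow> syz C (Suc i) X W"

text \<open>ext_vanishes C k Y X (for k \<ge> 1) means E^k(Y,X) = E(Omega^(k-1) Y, X) = 0,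
  for every choice of the syzygy Omega^(k-1) Y.\<close>
definition ext_vanishes :: "('o,'m,'e) extri_cat \<Rightarrow> nat \<Rightarrow> 'o \<Rightarrow> 'o \<Rightarrow> bool" where
  "ext_vanishes C k Y X \<longleftrightarrow> (\<forall>Z. syz C (k - 1) Y Z \<longrightarrow> Ex C Z X = {ezero C Z X})"

text \<open>Subcategories: full, additive, closed under isomorphisms (given by their objects).\<close>
definition subcategory :: "('o,'m,'e) extri_cat \<Rightarrow> 'o set \<Rightarrow> bool" where
  "subcategory C T \<longleftrightarrow> T \<subseteq> Ob C \<and> (\<exists>Z\<in>T. is_zero_obj C Z)
   \<and> (\<forall>A B P p1 p2 i1 i2. A \<in> T \<longrightarrow> B \<in> T \<longrightarrow> is_biproduct C A B P p1 p2 i1 i2 \<longrightarrow> P \<in> T)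
   \<and> (\<forall>A B f. A \<in> T \<longrightarrow> is_iso C A B f \<longrightarrow> B \<in> T)"

definition closed_under_summands :: "('o,'m,'e) extri_cat \<Rightarrow> 'o set \<Rightarrow> bool" where
  "closed_under_summands C T \<longleftrightarrow>
     (\<forall>A B P p1 p2 i1 i2. P \<in> T \<longrightarrow> is_biproduct C A B P p1 p2 i1 i2 \<longrightarrow> A \<in> T)"

definition self_orthogonal :: "('o,'m,'e) extri_cat \<Rightarrow> 'o set \<Rightarrow> bool" where
  "self_orthogonal C T \<longleftrightarrow> (\<forall>T1\<in>T. \<forall>T2\<in>T. \<forall>i\<ge>1. ext_vanishes C i T1 T2)"

definition lperp :: "('o,'m,'e) extri_cat \<Rightarrow> 'o set \<Rightarrow> 'o set" where
  "lperp C T = {Y \<in> Ob C. \<forall>i\<ge>1. \<forall>T'\<in>T. ext_vanishes C i Y T'}"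

definition Tcheck :: "('o,'m,'e) extri_cat \<Rightarrow> 'o set \<Rightarrow> nat \<Rightarrow> 'o set" where
  "Tcheck C T n = {A \<in> Ob C. \<exists>K Ti. K 0 = A \<and> (\<forall>i<n. etri C (K i) (Ti i) (K (Suc i)) \<and> Ti i \<in> T)
      \<and> K n \<in> T}"

definition XT :: "('o,'m,'e) extri_cat \<Rightarrow> 'o set \<Rightarrow> 'o set" where
  "XT C T = {A \<in> Ob C. \<exists>K Ti. K 0 = A \<and>
      (\<forall>i. etri C (K i) (Ti i) (K (Suc i)) \<and> Ti i \<in> T \<and> K (Suc i) \<in> lperp C T)}"

end

theory Submission
  imports Defs
begin

locale xcat = fixes C :: "('o,'m,'e) extri_cat" assumes xt: "extriangulated C"
begin

lemma cat: "is_category C" and add: "is_additive C" and et1: "ET1 C" and et2: "ET2 C"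
  and et3d: "ET3 C" and et3opd: "ET3op C" and et4d: "ET4 C"
  using xt unfolding extriangulated_def by auto

lemma hom_ob: "f \<in> Hom C A B \<Longrightarrow> A \<in> Ob C \<and> B \<in> Ob C"
  using cat[unfolded is_category_def, THEN conjunct1] by (metis empty_iff)
lemma idm_hom: "A \<in> Ob C \<Longrightarrow> idm C A \<in> Hom C A A"
  using cat[unfolded is_category_def, THEN conjunct2, THEN conjunct2, THEN conjunct1] by blast
lemma cmp_hom: "f \<in> Hom C A B \<Longrightarrow> g \<in> Hom C B D \<Longrightarrow> cmp C g f \<in> Hom C A D"
  using cat[unfolded is_category_def, THEN conjunct2, THEN conjunct2, THEN conjunct2, THEN conjunct1] by blast
lemma assoc: "f \<in> Hom C A B \<Longrightarrow> g \<in> Hom C B D \<Longrightarrow> h \<in> Hom C D F \<Longrightarrow>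
   cmp C h (cmp C g f) = cmp C (cmp C h g) f"
  using cat[unfolded is_category_def, THEN conjunct2, THEN conjunct2, THEN conjunct2, THEN conjunct2, THEN conjunct1] by blast
lemma idl: "f \<in> Hom C A B \<Longrightarrow> cmp C (idm C B) f = f"
  using cat[unfolded is_category_def, THEN conjunct2, THEN conjunct2, THEN conjunct2, THEN conjunct2, THEN conjunct2] by blast
lemma idr: "f \<in> Hom C A B \<Longrightarrow> cmp C f (idm C A) = f"
  using cat[unfolded is_category_def, THEN conjunct2, THEN conjunct2, THEN conjunct2, THEN conjunct2, THEN conjunct2] by blast
lemma biprod_ex: "A \<in> Ob C \<Longrightarrow> B \<in> Ob C \<Longrightarrow> \<exists>P p1 p2 i1 i2. is_biproduct C A B P p1 p2 i1 i2"
  using add[unfolded is_additive_def, THEN conjunct2, THEN conjunct2, THEN conjunct2, THEN conjunct2] by blast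

lemma ex_ob: "d \<in> Ex C D A \<Longrightarrow> D \<in> Ob C \<and> A \<in> Ob C"
  using et1[unfolded ET1_def, THEN conjunct1] by (metis empty_iff)
lemma ex_grp: "D \<in> Ob C \<Longrightarrow> A \<in> Ob C \<Longrightarrow> ab_group_on (Ex C D A) (eadd C) (eneg C) (ezero C D A)"
  using et1[unfolded ET1_def, THEN conjunct2, THEN conjunct2, THEN conjunct1] by blast
lemma ezero_ex: "D \<in> Ob C \<Longrightarrow> A \<in> Ob C \<Longrightarrow> ezero C D A \<in> Ex C D A"
  using ex_grp[unfolded ab_group_on_def] by blast
lemma push_ex: "a \<in> Hom C A A' \<Longrightarrow> d \<in> Ex C D A \<Longrightarrow> push C a d \<in> Ex C D A'"
  using et1[unfolded ET1_def, THEN conjunct2, THEN conjunct2, THEN conjunct2, THEN conjunct1] by blast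
lemma pull_ex: "c \<in> Hom C D' D \<Longrightarrow> d \<in> Ex C D A \<Longrightarrow> pull C c d \<in> Ex C D' A"
  using et1[unfolded ET1_def, THEN conjunct2, THEN conjunct2, THEN conjunct2, THEN conjunct2, THEN conjunct1] by blast
lemma push_id: "d \<in> Ex C D A \<Longrightarrow> push C (idm C A) d = d"
  using et1[unfolded ET1_def, THEN conjunct2, THEN conjunct2, THEN conjunct2, THEN conjunct2, THEN conjunct2, THEN conjunct1] by blast
lemma pull_id: "d \<in> Ex C D A \<Longrightarrow> pull C (idm C D) d = d"
  using et1[unfolded ET1_def, THEN conjunct2, THEN conjunct2, THEN conjunct2, THEN conjunct2, THEN conjunct2, THEN conjunct1] by blast
lemma push_cmp: "a \<in> Hom C A A' \<Longrightarrow> a' \<in> Hom C A' A'' \<Longrightarrow> d \<in> Ex C D A \<Longrightarrow>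
        push C (cmp C a' a) d = push C a' (push C a d)"
  using et1[unfolded ET1_def, THEN conjunct2, THEN conjunct2, THEN conjunct2, THEN conjunct2, THEN conjunct2, THEN conjunct2, THEN conjunct1] by blast
lemma pull_cmp: "c \<in> Hom C D' D \<Longrightarrow> c' \<in> Hom C D'' D' \<Longrightarrow> d \<in> Ex C D A \<Longrightarrow>
        pull C (cmp C c c') d = pull C c' (pull C c d)"
  using et1[unfolded ET1_def, THEN conjunct2, THEN conjunct2, THEN conjunct2, THEN conjunct2, THEN conjunct2, THEN conjunct2, THEN conjunct2, THEN conjunct1] by blast
lemma push_add: "a \<in> Hom C A A' \<Longrightarrow> d \<in> Ex C D A \<Longrightarrow> d' \<in> Ex C D A \<Longrightarrow>
        push C a (eadd C d d') = eadd C (push C a d) (push C a d')"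
  using et1[unfolded ET1_def, THEN conjunct2, THEN conjunct2, THEN conjunct2, THEN conjunct2, THEN conjunct2, THEN conjunct2, THEN conjunct2, THEN conjunct2, THEN conjunct2, THEN conjunct1] by blast
lemma pull_add: "c \<in> Hom C D' D \<Longrightarrow> d \<in> Ex C D A \<Longrightarrow> d' \<in> Ex C D A \<Longrightarrow>
        pull C c (eadd C d d') = eadd C (pull C c d) (pull C c d')"
  using et1[unfolded ET1_def, THEN conjunct2, THEN conjunct2, THEN conjunct2, THEN conjunct2, THEN conjunct2, THEN conjunct2, THEN conjunct2, THEN conjunct2, THEN conjunct2, THEN conjunct2, THEN conjunct1] by blast

lemma grp_idem: assumes "ab_group_on S ad ng z" "x \<in> S" "ad x x = x" shows "x = z"
proof -
  have g: "\<forall>a\<in>S. \<forall>b\<in>S. \<forall>c\<in>S. ad (ad a b) c = ad a (ad b c)" "\<forall>a\<in>S. ad z a = a"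
    "\<forall>a\<in>S. ad (ng a) a = z" "\<forall>a\<in>S. ng a \<in> S"
    using assms(1) unfolding ab_group_on_def by auto
  have "ad (ng x) (ad x x) = ad (ad (ng x) x) x" using g assms(2) by auto
  then show ?thesis using g assms by auto
qed

lemma zero_add: "D \<in> Ob C \<Longrightarrow> A \<in> Ob C \<Longrightarrow> eadd C (ezero C D A) (ezero C D A) = ezero C D A"
proof -
  assume a: "D \<in> Ob C" "A \<in> Ob C"
  have "\<forall>a\<in>Ex C D A. eadd C (ezero C D A) a = a" using ex_grp[OF a] unfolding ab_group_on_def by blast
  then show ?thesis using ezero_ex[OF a] by blast
qed

lemma push_zero: assumes "a \<in> Hom C A A'" "D \<in> Ob C" shows "push C a (ezero C D A) = ezero C D A'"
proof -
  have ob: "A \<in> Ob C" "A' \<in> Ob C" using hom_ob assms by auto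
  have z: "ezero C D A \<in> Ex C D A" using ezero_ex ob assms by auto
  have "push C a (ezero C D A) = eadd C (push C a (ezero C D A)) (push C a (ezero C D A))"
    using push_add[OF assms(1) z z] zero_add ob assms by metis
  then show ?thesis using grp_idem[OF ex_grp push_ex[OF assms(1) z]] ob assms by metis
qed

lemma pull_zero: assumes "c \<in> Hom C D' D" "A \<in> Ob C" shows "pull C c (ezero C D A) = ezero C D' A"
proof -
  have ob: "D \<in> Ob C" "D' \<in> Ob C" using hom_ob assms by auto
  have z: "ezero C D A \<in> Ex C D A" using ezero_ex ob assms by auto
  have "pull C c (ezero C D A) = eadd C (pull C c (ezero C D A)) (pull C c (ezero C D A))"
    using pull_add[OF assms(1) z z] zero_add ob assms by metis
  then show ?thesis using grp_idem[OF ex_grp pull_ex[OF assms(1) z]] ob assms by metis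
qed

lemma rea_ex: "d \<in> Ex C D A \<Longrightarrow> \<exists>B x y. x \<in> Hom C A B \<and> y \<in> Hom C B D \<and> rea C d x y"
  using et2[unfolded ET2_def, THEN conjunct2, THEN conjunct1] by blast
lemma rea_equiv: "d \<in> Ex C D A \<Longrightarrow> x \<in> Hom C A B \<Longrightarrow> y \<in> Hom C B D \<Longrightarrow> rea C d x y \<Longrightarrow>
        x' \<in> Hom C A B' \<Longrightarrow> y' \<in> Hom C B' D \<Longrightarrow> rea C d x' y' \<Longrightarrow> equiv_seq C B B' x y x' y'"
  using et2[unfolded ET2_def, THEN conjunct2, THEN conjunct2, THEN conjunct1] by blast
lemma rea_mor: "d \<in> Ex C D A \<Longrightarrow> d' \<in> Ex C D' A' \<Longrightarrow> x \<in> Hom C A B \<Longrightarrow> y \<in> Hom C B D \<Longrightarrow>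
        x' \<in> Hom C A' B' \<Longrightarrow> y' \<in> Hom C B' D' \<Longrightarrow> rea C d x y \<Longrightarrow> rea C d' x' y' \<Longrightarrow>
        a \<in> Hom C A A' \<Longrightarrow> c \<in> Hom C D D' \<Longrightarrow> push C a d = pull C c d' \<Longrightarrow>
        (\<exists>b\<in>Hom C B B'. cmp C b x = cmp C x' a \<and> cmp C c y = cmp C y' b)"
  using et2[unfolded ET2_def, THEN conjunct2, THEN conjunct2, THEN conjunct2, THEN conjunct1] by blast
lemma rea_zero: "is_biproduct C A D P p1 p2 i1 i2 \<Longrightarrow> rea C (ezero C D A) i1 p2"
  using et2[unfolded ET2_def, THEN conjunct2, THEN conjunct2, THEN conjunct2, THEN conjunct2, THEN conjunct1] by blast
lemma et3: "d \<in> Ex C D A \<Longrightarrow> d' \<in> Ex C D' A' \<Longrightarrow> x \<in> Hom C A B \<Longrightarrow> y \<in> Hom C B D \<Longrightarrow>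
        x' \<in> Hom C A' B' \<Longrightarrow> y' \<in> Hom C B' D' \<Longrightarrow> rea C d x y \<Longrightarrow> rea C d' x' y' \<Longrightarrow>
        a \<in> Hom C A A' \<Longrightarrow> b \<in> Hom C B B' \<Longrightarrow> cmp C b x = cmp C x' a \<Longrightarrow>
        (\<exists>c\<in>Hom C D D'. cmp C c y = cmp C y' b \<and> push C a d = pull C c d')"
  using et3d unfolding ET3_def by blast
lemma et3op: "d \<in> Ex C D A \<Longrightarrow> d' \<in> Ex C D' A' \<Longrightarrow> x \<in> Hom C A B \<Longrightarrow> y \<in> Hom C B D \<Longrightarrow>
        x' \<in> Hom C A' B' \<Longrightarrow> y' \<in> Hom C B' D' \<Longrightarrow> rea C d x y \<Longrightarrow> rea C d' x' y' \<Longrightarrow>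
        b \<in> Hom C B B' \<Longrightarrow> c \<in> Hom C D D' \<Longrightarrow> cmp C c y = cmp C y' b \<Longrightarrow>
        (\<exists>a\<in>Hom C A A'. cmp C b x = cmp C x' a \<and> push C a d = pull C c d')"
  using et3opd unfolding ET3op_def by blast
lemma et4: "d \<in> Ex C D A \<Longrightarrow> f \<in> Hom C A B \<Longrightarrow> f' \<in> Hom C B D \<Longrightarrow> rea C d f f' \<Longrightarrow>
        d' \<in> Ex C F B \<Longrightarrow> g \<in> Hom C B G \<Longrightarrow> g' \<in> Hom C G F \<Longrightarrow> rea C d' g g' \<Longrightarrow>
        (\<exists>E h' dd e d''. h' \<in> Hom C G E \<and> dd \<in> Hom C D E \<and> e \<in> Hom C E F \<and> d'' \<in> Ex C E A
           \<and> rea C d'' (cmp C g f) h'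
           \<and> cmp C dd f' = cmp C h' g \<and> cmp C e h' = g'
           \<and> rea C (push C f' d') dd e
           \<and> pull C dd d'' = d
           \<and> push C f d'' = pull C e d')"
  using et4d unfolding ET4_def by blast

lemma bp: assumes "is_biproduct C A B P p1 p2 i1 i2"
  shows "P \<in> Ob C" "p1 \<in> Hom C P A" "p2 \<in> Hom C P B" "i1 \<in> Hom C A P" "i2 \<in> Hom C B P"
   "cmp C p1 i1 = idm C A" "cmp C p2 i2 = idm C B"
  using assms unfolding is_biproduct_def by auto

lemma proj_lift: "projective C P \<Longrightarrow> d \<in> Ex C D A \<Longrightarrow> x \<in> Hom C A B \<Longrightarrow> y \<in> Hom C B D \<Longrightarrow>
   rea C d x y \<Longrightarrow> c \<in> Hom C P D \<Longrightarrow> \<exists>b\<in>Hom C P B. cmp C y b = c"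
  unfolding projective_def by blast
lemma inj_ext: "injective C I \<Longrightarrow> d \<in> Ex C D A \<Longrightarrow> x \<in> Hom C A B \<Longrightarrow> y \<in> Hom C B D \<Longrightarrow>
   rea C d x y \<Longrightarrow> a \<in> Hom C A I \<Longrightarrow> \<exists>b\<in>Hom C B I. cmp C b x = a"
  unfolding injective_def by blast

lemma F1a: assumes "d \<in> Ex C D A" "x \<in> Hom C A B" "y \<in> Hom C B D" "rea C d x y"
  shows "pull C y d = ezero C B A"
proof -
  have ob: "A \<in> Ob C" "B \<in> Ob C" using hom_ob assms by auto
  obtain Q p1 p2 i1 i2 where bq: "is_biproduct C A B Q p1 p2 i1 i2" using biprod_ex ob by blast
  note r0 = rea_zero[OF bq]
  from et3op[OF ezero_ex[OF ob(2) ob(1)] assms(1) bp(4)[OF bq] bp(3)[OF bq] assms(2) assms(3) r0 assms(4)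
     bp(3)[OF bq] assms(3) refl]
  obtain a where "a \<in> Hom C A A" "push C a (ezero C B A) = pull C y d" by blast
  then show ?thesis using push_zero ob by metis
qed

lemma F1b: assumes "d \<in> Ex C D A" "x \<in> Hom C A B" "y \<in> Hom C B D" "rea C d x y"
  shows "push C x d = ezero C D B"
proof -
  have ob: "B \<in> Ob C" "D \<in> Ob C" using hom_ob assms by auto
  obtain Q p1 p2 i1 i2 where bq: "is_biproduct C B D Q p1 p2 i1 i2" using biprod_ex ob by blast
  note r0 = rea_zero[OF bq]
  from et3[OF assms(1) ezero_ex[OF ob(2) ob(1)] assms(2) assms(3) bp(4)[OF bq] bp(3)[OF bq] assms(4) r0
     assms(2) bp(4)[OF bq] refl]
  obtain c where "c \<in> Hom C D D" "push C x d = pull C c (ezero C D B)" by blast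
  then show ?thesis using pull_zero ob by metis
qed

lemma F2: assumes e: "e \<in> Ex C W A" and d: "d \<in> Ex C D A" and u: "u \<in> Hom C A B" and v: "v \<in> Hom C B D"
  and rd: "rea C d u v" and z: "push C u e = ezero C W B"
  shows "\<exists>f\<in>Hom C W D. e = pull C f d"
proof -
  have ob: "W \<in> Ob C" "A \<in> Ob C" "B \<in> Ob C" using hom_ob ex_ob e u by auto
  obtain M m q where m: "m \<in> Hom C A M" and q: "q \<in> Hom C M W" and re: "rea C e m q" using rea_ex[OF e] by blast
  obtain Q p1 p2 i1 i2 where bq: "is_biproduct C B W Q p1 p2 i1 i2" using biprod_ex ob by blast
  note r0 = rea_zero[OF bq]
  have eq: "push C u e = pull C (idm C W) (ezero C W B)" using z pull_id ezero_ex ob by metis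
  from rea_mor[OF e ezero_ex[OF ob(1) ob(3)] m q bp(4)[OF bq] bp(3)[OF bq] re r0 u idm_hom[OF ob(1)] eq]
  obtain b where b: "b \<in> Hom C M Q" "cmp C b m = cmp C i1 u" by blast
  have nh: "cmp C p1 b \<in> Hom C M B" using cmp_hom b bp(2)[OF bq] by blast
  have "cmp C (cmp C p1 b) m = cmp C p1 (cmp C b m)" using assoc[OF m b(1) bp(2)[OF bq]] by simp
  also have "\<dots> = cmp C (cmp C p1 i1) u" using b(2) assoc[OF u bp(4)[OF bq] bp(2)[OF bq]] by simp
  also have "\<dots> = cmp C u (idm C A)" using bp(6)[OF bq] idl[OF u] idr[OF u] by simp
  finally have nm: "cmp C (cmp C p1 b) m = cmp C u (idm C A)" .
  from et3[OF e d m q u v re rd idm_hom[OF ob(2)] nh nm]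
  obtain c where "c \<in> Hom C W D" "push C (idm C A) e = pull C c d" by blast
  then show ?thesis using push_id[OF e] by metis
qed

lemma F2': assumes e: "e \<in> Ex C Z D" and dl: "\<delta> \<in> Ex C Z W" and w: "w \<in> Hom C W P" and p: "p \<in> Hom C P Z"
  and rd: "rea C \<delta> w p" and z: "pull C p e = ezero C P D"
  shows "\<exists>f\<in>Hom C W D. e = push C f \<delta>"
proof -
  have ob: "Z \<in> Ob C" "D \<in> Ob C" "P \<in> Ob C" using hom_ob ex_ob e p by auto
  obtain M m q where m: "m \<in> Hom C D M" and q: "q \<in> Hom C M Z" and re: "rea C e m q" using rea_ex[OF e] by blast
  obtain Q p1 p2 i1 i2 where bq: "is_biproduct C D P Q p1 p2 i1 i2" using biprod_ex ob by blast
  note r0 = rea_zero[OF bq]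
  have eq: "push C (idm C D) (ezero C P D) = pull C p e" using z push_id ezero_ex ob by metis
  from rea_mor[OF ezero_ex[OF ob(3) ob(2)] e bp(4)[OF bq] bp(3)[OF bq] m q r0 re idm_hom[OF ob(2)] p eq]
  obtain b where b: "b \<in> Hom C Q M" "cmp C p p2 = cmp C q b" by blast
  have nh: "cmp C b i2 \<in> Hom C P M" using cmp_hom b bp(5)[OF bq] by blast
  have "cmp C q (cmp C b i2) = cmp C (cmp C q b) i2" using assoc[OF bp(5)[OF bq] b(1) q] by simp
  also have "\<dots> = cmp C p (cmp C p2 i2)" using b(2) assoc[OF bp(5)[OF bq] bp(3)[OF bq] p] by simp
  also have "\<dots> = cmp C (idm C Z) p" using bp(7)[OF bq] idl[OF p] idr[OF p] by simp
  finally have nm: "cmp C (idm C Z) p = cmp C q (cmp C b i2)" by simp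
  from et3op[OF dl e w p m q rd re nh idm_hom[OF ob(1)] nm]
  obtain a where "a \<in> Hom C W D" "push C a \<delta> = pull C (idm C Z) e" by blast
  then show ?thesis using pull_id[OF e] by metis
qed

lemma F3: assumes dl: "\<delta> \<in> Ex C Z W" and w: "w \<in> Hom C W P" and p: "p \<in> Hom C P Z"
  and rd: "rea C \<delta> w p" and f: "f \<in> Hom C W D" and z: "push C f \<delta> = ezero C Z D"
  shows "\<exists>g\<in>Hom C P D. f = cmp C g w"
proof -
  have ob: "Z \<in> Ob C" "D \<in> Ob C" using hom_ob p f by auto
  obtain Q p1 p2 i1 i2 where bq: "is_biproduct C D Z Q p1 p2 i1 i2" using biprod_ex ob by blast
  note r0 = rea_zero[OF bq]
  have eq: "push C f \<delta> = pull C (idm C Z) (ezero C Z D)" using z pull_id ezero_ex ob by metis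
  from rea_mor[OF dl ezero_ex[OF ob(1) ob(2)] w p bp(4)[OF bq] bp(3)[OF bq] rd r0 f idm_hom[OF ob(1)] eq]
  obtain b where b: "b \<in> Hom C P Q" "cmp C b w = cmp C i1 f" by blast
  have gh: "cmp C p1 b \<in> Hom C P D" using cmp_hom b bp(2)[OF bq] by blast
  have "cmp C (cmp C p1 b) w = cmp C p1 (cmp C b w)" using assoc[OF w b(1) bp(2)[OF bq]] by simp
  also have "\<dots> = cmp C (cmp C p1 i1) f" using b(2) assoc[OF f bp(4)[OF bq] bp(2)[OF bq]] by simp
  also have "\<dots> = f" using bp(6)[OF bq] idl[OF f] by simp
  finally show ?thesis using gh by metis
qed

lemma F3': assumes d: "d \<in> Ex C D A" and u: "u \<in> Hom C A B" and v: "v \<in> Hom C B D"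
  and rd: "rea C d u v" and f: "f \<in> Hom C W D" and z: "pull C f d = ezero C W A"
  shows "\<exists>g\<in>Hom C W B. f = cmp C v g"
proof -
  have ob: "W \<in> Ob C" "A \<in> Ob C" using hom_ob u f by auto
  obtain Q p1 p2 i1 i2 where bq: "is_biproduct C A W Q p1 p2 i1 i2" using biprod_ex ob by blast
  note r0 = rea_zero[OF bq]
  have eq: "push C (idm C A) (ezero C W A) = pull C f d" using z push_id ezero_ex ob by metis
  from rea_mor[OF ezero_ex[OF ob(1) ob(2)] d bp(4)[OF bq] bp(3)[OF bq] u v r0 rd idm_hom[OF ob(2)] f eq]
  obtain b where b: "b \<in> Hom C Q B" "cmp C f p2 = cmp C v b" by blast
  have gh: "cmp C b i2 \<in> Hom C W B" using cmp_hom b bp(5)[OF bq] by blast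
  have "cmp C v (cmp C b i2) = cmp C (cmp C v b) i2" using assoc[OF bp(5)[OF bq] b(1) v] by simp
  also have "\<dots> = cmp C f (cmp C p2 i2)" using b(2) assoc[OF bp(5)[OF bq] bp(3)[OF bq] f] by simp
  also have "\<dots> = f" using bp(7)[OF bq] idr[OF f] by simp
  finally show ?thesis using gh by metis
qed

definition vanish :: "'o \<Rightarrow> 'o \<Rightarrow> bool" where
  "vanish Z X \<longleftrightarrow> (\<forall>e\<in>Ex C Z X. e = ezero C Z X)"

lemma proj_van: assumes pr: "projective C P" shows "vanish P D"
  unfolding vanish_def
proof
  fix e assume e: "e \<in> Ex C P D"
  have ob: "P \<in> Ob C" "D \<in> Ob C" using ex_ob e by auto
  obtain M m q where m: "m \<in> Hom C D M" and q: "q \<in> Hom C M P" and re: "rea C e m q" using rea_ex[OF e] by blast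
  obtain s where s: "s \<in> Hom C P M" "cmp C q s = idm C P" using proj_lift[OF pr e m q re idm_hom[OF ob(1)]] by blast
  have "e = pull C (cmp C q s) e" using s pull_id[OF e] by simp
  also have "\<dots> = pull C s (pull C q e)" using pull_cmp[OF q s(1) e] .
  also have "\<dots> = ezero C P D" using F1a[OF e m q re] pull_zero[OF s(1) ob(2)] by simp
  finally show "e = ezero C P D" .
qed

lemma inj_van: assumes inj: "injective C I" shows "vanish W I"
  unfolding vanish_def
proof
  fix e assume e: "e \<in> Ex C W I"
  have ob: "W \<in> Ob C" "I \<in> Ob C" using ex_ob e by auto
  obtain M m q where m: "m \<in> Hom C I M" and q: "q \<in> Hom C M W" and re: "rea C e m q" using rea_ex[OF e] by blast
  obtain r where r: "r \<in> Hom C M I" "cmp C r m = idm C I" using inj_ext[OF inj e m q re idm_hom[OF ob(2)]] by blast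
  have "e = push C (cmp C r m) e" using r push_id[OF e] by simp
  also have "\<dots> = push C r (push C m e)" using push_cmp[OF m r(1) e] .
  also have "\<dots> = ezero C W I" using F1b[OF e m q re] push_zero[OF r(1) ob(1)] by simp
  finally show "e = ezero C W I" .
qed

lemma D1: assumes dl: "\<delta> \<in> Ex C Z W" and w: "w \<in> Hom C W P" and p: "p \<in> Hom C P Z" and rdl: "rea C \<delta> w p"
  and et: "\<eta> \<in> Ex C D A" and u: "u \<in> Hom C A B" and v: "v \<in> Hom C B D" and ret: "rea C \<eta> u v"
  and v1: "vanish W B" and v2: "vanish Z D" and v3: "vanish P A"
  shows "vanish W A"
  unfolding vanish_def
proof
  fix e assume e: "e \<in> Ex C W A"
  have ob: "W \<in> Ob C" "A \<in> Ob C" using ex_ob e by auto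
  have "push C u e = ezero C W B" using v1 push_ex[OF u e] unfolding vanish_def by blast
  then obtain f where f: "f \<in> Hom C W D" "e = pull C f \<eta>" using F2[OF e et u v ret] by blast
  have "push C f \<delta> = ezero C Z D" using v2 push_ex[OF f(1) dl] unfolding vanish_def by blast
  then obtain g where g: "g \<in> Hom C P D" "f = cmp C g w" using F3[OF dl w p rdl f(1)] by blast
  have z: "pull C g \<eta> = ezero C P A" using v3 pull_ex[OF g(1) et] unfolding vanish_def by blast
  have "e = pull C w (pull C g \<eta>)" using f(2) g(2) pull_cmp[OF g(1) w et] by simp
  then show "e = ezero C W A" using z pull_zero[OF w ob(2)] by simp
qed

lemma D2: assumes dl: "\<delta> \<in> Ex C Z W" and w: "w \<in> Hom C W P" and p: "p \<in> Hom C P Z" and rdl: "rea C \<delta> w p"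
  and et: "\<eta> \<in> Ex C D A" and u: "u \<in> Hom C A B" and v: "v \<in> Hom C B D" and ret: "rea C \<eta> u v"
  and v1: "vanish P D" and v2: "vanish W A" and v3: "vanish Z B"
  shows "vanish Z D"
  unfolding vanish_def
proof
  fix e assume e: "e \<in> Ex C Z D"
  have ob: "Z \<in> Ob C" "D \<in> Ob C" using ex_ob e by auto
  have "pull C p e = ezero C P D" using v1 pull_ex[OF p e] unfolding vanish_def by blast
  then obtain f where f: "f \<in> Hom C W D" "e = push C f \<delta>" using F2'[OF e dl w p rdl] by blast
  have "pull C f \<eta> = ezero C W A" using v2 pull_ex[OF f(1) et] unfolding vanish_def by blast
  then obtain g where g: "g \<in> Hom C W B" "f = cmp C v g" using F3'[OF et u v ret f(1)] by blast
  have z: "push C g \<delta> = ezero C Z B" using v3 push_ex[OF g(1) dl] unfolding vanish_def by blast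
  have "e = push C v (push C g \<delta>)" using f(2) g(2) push_cmp[OF g(1) v dl] by simp
  then show "e = ezero C Z D" using z push_zero[OF v ob(1)] by simp
qed

lemma H: assumes d: "d \<in> Ex C L Y" and x: "x \<in> Hom C Y S" and y: "y \<in> Hom C S L" and rd: "rea C d x y"
  and vS: "vanish S U" and pr: "projective C P" and dl: "\<delta> \<in> Ex C L W" and w: "w \<in> Hom C W P"
  and p: "p \<in> Hom C P L" and rdl: "rea C \<delta> w p" and vW: "vanish W U"
  shows "vanish Y U"
  unfolding vanish_def
proof
  fix e assume e: "e \<in> Ex C Y U"
  have ob: "Y \<in> Ob C" "U \<in> Ob C" "L \<in> Ob C" using ex_ob e d by auto
  obtain M u v where u: "u \<in> Hom C U M" and v: "v \<in> Hom C M Y" and re: "rea C e u v" using rea_ex[OF e] by blast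
  obtain g where g: "g \<in> Hom C P S" "cmp C y g = p" using proj_lift[OF pr d x y rd p] by blast
  have cc: "cmp C (idm C L) p = cmp C y g" using g idl[OF p] by simp
  obtain a where a: "a \<in> Hom C W Y" "push C a \<delta> = pull C (idm C L) d"
    using et3op[OF dl d w p x y rdl rd g(1) idm_hom[OF ob(3)] cc] by blast
  have ad: "push C a \<delta> = d" using a pull_id[OF d] by simp
  have "pull C a e = ezero C W U" using vW pull_ex[OF a(1) e] unfolding vanish_def by blast
  then obtain a' where a': "a' \<in> Hom C W M" "a = cmp C v a'" using F3'[OF e u v re a(1)] by blast
  define d' where "d' = push C a' \<delta>"
  have d': "d' \<in> Ex C L M" using push_ex[OF a'(1) dl] d'_def by simp
  have vd: "push C v d' = d" using d'_def push_cmp[OF a'(1) v dl] a'(2) ad by simp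
  obtain G g2 g2' where g2: "g2 \<in> Hom C M G" and g2': "g2' \<in> Hom C G L" and rd': "rea C d' g2 g2'"
    using rea_ex[OF d'] by blast
  obtain E h' dd e' d'' where dd: "dd \<in> Hom C Y E" and e': "e' \<in> Hom C E L" and d'': "d'' \<in> Ex C E U"
    and r2: "rea C (push C v d') dd e'" and pd: "pull C dd d'' = e"
    using et4[OF e u v re d' g2 g2' rd'] by blast
  have "equiv_seq C S E x y dd e'" using rea_equiv[OF d x y rd dd e'] r2 vd by simp
  then obtain b where b: "is_iso C S E b" "cmp C b x = dd" unfolding equiv_seq_def by blast
  have bh: "b \<in> Hom C S E" using b unfolding is_iso_def by blast
  have z: "pull C b d'' = ezero C S U" using vS pull_ex[OF bh d''] unfolding vanish_def by blast
  have "e = pull C x (pull C b d'')" using pd b(2) pull_cmp[OF bh x d''] by simp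
  then show "e = ezero C Y U" using z pull_zero[OF x ob(2)] by simp
qed


lemma etri_D: "etri C A B D \<Longrightarrow> \<exists>x y d. d \<in> Ex C D A \<and> x \<in> Hom C A B \<and> y \<in> Hom C B D \<and> rea C d x y"
  unfolding etri_def by blast
lemma etri_ob: "etri C A B D \<Longrightarrow> A \<in> Ob C \<and> B \<in> Ob C \<and> D \<in> Ob C"
  unfolding etri_def using hom_ob by blast
lemma syz_ob: "syz C i X Z \<Longrightarrow> X \<in> Ob C \<and> Z \<in> Ob C"
  by (induction rule: syz.induct) (auto dest: etri_ob)
lemma van_eq: "Z \<in> Ob C \<Longrightarrow> X \<in> Ob C \<Longrightarrow> Ex C Z X = {ezero C Z X} \<longleftrightarrow> vanish Z X"
  unfolding vanish_def using ezero_ex by blast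
lemma D1e: "etri C W P Z \<Longrightarrow> etri C A B D \<Longrightarrow> vanish W B \<Longrightarrow> vanish Z D \<Longrightarrow> vanish P A \<Longrightarrow> vanish W A"
proof -
  assume a: "etri C W P Z" "etri C A B D" "vanish W B" "vanish Z D" "vanish P A"
  obtain w p dl where "dl \<in> Ex C Z W" "w \<in> Hom C W P" "p \<in> Hom C P Z" "rea C dl w p"
    using etri_D[OF a(1)] by blast
  moreover obtain u v et where "et \<in> Ex C D A" "u \<in> Hom C A B" "v \<in> Hom C B D" "rea C et u v"
    using etri_D[OF a(2)] by blast
  ultimately show ?thesis using D1 a(3-5) by blast
qed
lemma D2e: "etri C W P Z \<Longrightarrow> etri C A B D \<Longrightarrow> vanish P D \<Longrightarrow> vanish W A \<Longrightarrow> vanish Z B \<Longrightarrow> vanish Z D"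
proof -
  assume a: "etri C W P Z" "etri C A B D" "vanish P D" "vanish W A" "vanish Z B"
  obtain w p dl where "dl \<in> Ex C Z W" "w \<in> Hom C W P" "p \<in> Hom C P Z" "rea C dl w p"
    using etri_D[OF a(1)] by blast
  moreover obtain u v et where "et \<in> Ex C D A" "u \<in> Hom C A B" "v \<in> Hom C B D" "rea C et u v"
    using etri_D[OF a(2)] by blast
  ultimately show ?thesis using D2 a(3-5) by blast
qed
lemma lperp_van: assumes "Y \<in> lperp C T" "T' \<in> T" "syz C k Y Z" shows "vanish Z T'"
proof -
  have "ext_vanishes C (Suc k) Y T'" using assms(1,2) unfolding lperp_def by auto
  then have "Ex C Z T' = {ezero C Z T'}" using assms(3) unfolding ext_vanishes_def by simp
  then show ?thesis unfolding vanish_def by blast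
qed

lemma partB: assumes X: "X \<in> Tcheck C T n" and Y: "Y \<in> lperp C T" shows "ext_vanishes C (Suc n) Y X"
proof -
  obtain K Ti where K0: "K 0 = X" and KT: "\<forall>i<n. etri C (K i) (Ti i) (K (Suc i)) \<and> Ti i \<in> T"
    and Kn: "K n \<in> T" and Xob: "X \<in> Ob C" using X unfolding Tcheck_def by blast
  have Yob: "Y \<in> Ob C" using Y unfolding lperp_def by blast
  have claim: "j \<le> n \<Longrightarrow> syz C j Y Z \<Longrightarrow> vanish Z (K (n-j))" for j Z
  proof (induction j arbitrary: Z)
    case 0
    then have "Z = Y" by (auto elim: syz.cases)
    then show ?case using lperp_van[OF Y Kn syz.syz0[OF Yob]] by simp
  next
    case (Suc j)
    from Suc.prems(2) obtain Z0 P where s: "syz C j Y Z0" "projective C P" "etri C Z P Z0"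
      by (auto elim: syz.cases)
    have IH: "vanish Z0 (K (n-j))" using Suc.IH[OF _ s(1)] Suc.prems(1) by simp
    define m where "m = n - Suc j"
    have m: "m < n" "Suc m = n - j" using Suc.prems(1) m_def by auto
    have t: "etri C (K m) (Ti m) (K (Suc m))" "Ti m \<in> T" using KT m by auto
    have v1: "vanish Z (Ti m)" using lperp_van[OF Y t(2) Suc.prems(2)] .
    have "vanish Z (K m)" using D1e[OF s(3) t(1) v1 _ proj_van[OF s(2)]] IH m by simp
    then show ?case using m_def by simp
  qed
  show ?thesis unfolding ext_vanishes_def
  proof (intro allI impI)
    fix Z assume "syz C (Suc n - 1) Y Z"
    then have z: "syz C n Y Z" by simp
    have "vanish Z X" using claim[OF _ z] K0 by simp
    then show "Ex C Z X = {ezero C Z X}" using van_eq syz_ob[OF z] Xob by blast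
  qed
qed

lemma partC: assumes K0: "K 0 = X"
  and KT: "\<forall>i. etri C (K i) (Ti i) (K (Suc i)) \<and> Ti i \<in> T \<and> K (Suc i) \<in> lperp C T"
  and Xob: "X \<in> Ob C" and EP: "enough_projectives C" and ST: "subcategory C T"
  and CS: "closed_under_summands C T" and V: "ext_vanishes C (Suc n) (K (Suc n)) X"
  shows "X \<in> Tcheck C T n"
proof -
  define Y where "Y = K (Suc n)"
  have Yl: "Y \<in> lperp C T" using KT Y_def by blast
  have Yob: "Y \<in> Ob C" using Yl unfolding lperp_def by blast
  have claim: "j \<le> n \<Longrightarrow> syz C (n-j) Y Z \<Longrightarrow> vanish Z (K j)" for j Z
  proof (induction j arbitrary: Z)
    case 0
    then have "Ex C Z X = {ezero C Z X}" using V Y_def unfolding ext_vanishes_def by simp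
    then show ?case using K0 unfolding vanish_def by blast
  next
    case (Suc j)
    have Zob: "Z \<in> Ob C" using syz_ob[OF Suc.prems(2)] by blast
    obtain W P where pr: "projective C P" and et: "etri C W P Z"
      using EP Zob unfolding enough_projectives_def by blast
    have "n - j = Suc (n - Suc j)" using Suc.prems(1) by simp
    then have sW: "syz C (n - j) Y W" using syz.syzS[OF Suc.prems(2) pr et] by simp
    have IH: "vanish W (K j)" using Suc.IH[OF _ sW] Suc.prems(1) by simp
    have t: "etri C (K j) (Ti j) (K (Suc j))" "Ti j \<in> T" using KT by auto
    have vZ: "vanish Z (Ti j)" using lperp_van[OF Yl t(2) Suc.prems(2)] .
    show ?case using D2e[OF et t(1) proj_van[OF pr] IH vZ] .
  qed
  have vn: "vanish Y (K n)" using claim[of n Y] syz.syz0[OF Yob] by simp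
  obtain x y d where d: "d \<in> Ex C Y (K n)" and x: "x \<in> Hom C (K n) (Ti n)" and y: "y \<in> Hom C (Ti n) Y"
    and rd: "rea C d x y" using etri_D KT Y_def by blast
  have d0: "d = ezero C Y (K n)" using vn d unfolding vanish_def by blast
  have Knob: "K n \<in> Ob C" using hom_ob x by blast
  obtain Q p1 p2 i1 i2 where bq: "is_biproduct C (K n) Y Q p1 p2 i1 i2" using biprod_ex Knob Yob by blast
  have r0: "rea C d i1 p2" using rea_zero[OF bq] d0 by simp
  have "equiv_seq C (Ti n) Q x y i1 p2" using rea_equiv[OF d x y rd bp(4)[OF bq] bp(3)[OF bq] r0] .
  then obtain b where b: "is_iso C (Ti n) Q b" unfolding equiv_seq_def by blast
  have "Ti n \<in> T" using KT by blast
  then have "Q \<in> T" using ST b unfolding subcategory_def by blast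
  then have KnT: "K n \<in> T" using CS bq unfolding closed_under_summands_def by blast
  show ?thesis unfolding Tcheck_def using Xob K0 KT KnT by blast
qed

lemma partA: assumes EP: "enough_projectives C" and EI: "enough_injectives C"
  and ST: "subcategory C T" and SO: "self_orthogonal C T" and Y: "Y \<in> XT C T"
  shows "Y \<in> lperp C T"
proof -
  obtain K Ti where K0: "K 0 = Y"
    and KT: "\<forall>i. etri C (K i) (Ti i) (K (Suc i)) \<and> Ti i \<in> T \<and> K (Suc i) \<in> lperp C T"
    and Yob: "Y \<in> Ob C" using Y unfolding XT_def by blast
  have TOb: "T \<subseteq> Ob C" using ST unfolding subcategory_def by blast
  have Tl: "T' \<in> lperp C T" if "T' \<in> T" for T'
    using that TOb SO unfolding lperp_def self_orthogonal_def by blast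
  have "\<forall>A\<in>Ob C. \<exists>q. injective C (fst q) \<and> etri C A (fst q) (snd q)"
    using EI unfolding enough_injectives_def by auto
  then have "\<exists>fq. \<forall>A\<in>Ob C. injective C (fst (fq A)) \<and> etri C A (fst (fq A)) (snd (fq A))"
    by (rule bchoice)
  then obtain fq where fq: "\<forall>A\<in>Ob C. injective C (fst (fq A)) \<and> etri C A (fst (fq A)) (snd (fq A))"
    by (elim exE)
  define fI where "fI A = fst (fq A)" for A
  define fD where "fD A = snd (fq A)" for A
  have fi: "\<forall>A\<in>Ob C. injective C (fI A) \<and> etri C A (fI A) (fD A)" using fq fI_def fD_def by simp
  have main: "ext_vanishes C i Y T'" if T': "T' \<in> T" for i T'
  proof -
    define U where "U k = (fD ^^ k) T'" for k
    have Uob: "U k \<in> Ob C" for k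
    proof (induction k)
      case 0 then show ?case using T' TOb U_def by auto
    next
      case (Suc k)
      then have "etri C (U k) (fI (U k)) (fD (U k))" using fi by blast
      then have "fD (U k) \<in> Ob C" using etri_ob by blast
      then show ?case using U_def by simp
    qed
    have Ut: "injective C (fI (U k))" "etri C (U k) (fI (U k)) (U (Suc k))" for k
      using fi Uob U_def by auto
    have claimC: "X0 \<in> lperp C T \<Longrightarrow> syz C j X0 Z \<Longrightarrow> vanish Z (U k)" for k X0 j Z
    proof (induction k arbitrary: j Z)
      case 0 then show ?case using lperp_van[OF _ T'] U_def by simp
    next
      case (Suc k)
      have Zob: "Z \<in> Ob C" using syz_ob[OF Suc.prems(2)] by blast
      obtain W P where pr: "projective C P" and et: "etri C W P Z"
        using EP Zob unfolding enough_projectives_def by blast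
      have IH: "vanish W (U k)" using Suc.IH[OF Suc.prems(1) syz.syzS[OF Suc.prems(2) pr et]] .
      show ?case using D2e[OF et Ut(2) proj_van[OF pr] IH inj_van[OF Ut(1)]] .
    qed
    have vY: "vanish Y (U k)" for k
    proof -
      obtain x y d where d: "d \<in> Ex C (K 1) Y" and x: "x \<in> Hom C Y (Ti 0)" and y: "y \<in> Hom C (Ti 0) (K 1)"
        and rd: "rea C d x y" using etri_D[of "K 0" "Ti 0" "K (Suc 0)"] KT K0 by auto
      have T0: "Ti 0 \<in> lperp C T" using KT Tl by blast
      have vS: "vanish (Ti 0) (U k)" using claimC[OF T0 syz.syz0] T0 unfolding lperp_def by blast
      have K1: "K 1 \<in> lperp C T" using spec[OF KT, of 0] by simp
      have K1ob: "K 1 \<in> Ob C" using K1 unfolding lperp_def by blast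
      obtain W P where pr: "projective C P" and et: "etri C W P (K 1)"
        using EP K1ob unfolding enough_projectives_def by blast
      obtain w p dl where dl: "dl \<in> Ex C (K 1) W" and w: "w \<in> Hom C W P" and p: "p \<in> Hom C P (K 1)"
        and rdl: "rea C dl w p" using etri_D[OF et] by blast
      have vW: "vanish W (U k)" using claimC[OF K1 syz.syzS[OF syz.syz0[OF K1ob] pr et]] .
      show ?thesis using H[OF d x y rd vS pr dl w p rdl vW] .
    qed
    have claimB: "syz C j X' Z \<Longrightarrow> (\<forall>k. vanish X' (U k)) \<Longrightarrow> vanish Z (U k)" for j X' Z k
    proof (induction arbitrary: k rule: syz.induct)
      case (syz0 X) then show ?case by blast
    next
      case (syzS i X Z P W)
      have IH: "vanish Z (U (Suc k))" using syzS.IH syzS.prems by blast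
      show ?case using D1e[OF syzS.hyps(3) Ut(2) inj_van[OF Ut(1)] IH proj_van[OF syzS.hyps(2)]] .
    qed
    show ?thesis unfolding ext_vanishes_def
    proof (intro allI impI)
      fix Z assume z: "syz C (i - 1) Y Z"
      have "vanish Z (U 0)" using claimB[OF z] vY by blast
      then show "Ex C Z T' = {ezero C Z T'}" using van_eq syz_ob[OF z] T' TOb U_def by auto
    qed
  qed
  show ?thesis unfolding lperp_def using Yob main by blast
qed

end

theorem lemma3p5:
  fixes C :: "('o,'m,'e) extri_cat" and T :: "'o set" and n :: nat and X :: 'o
  assumes "extriangulated C" and "krull_schmidt C"
    and "enough_projectives C" and "enough_injectives C"
    and "subcategory C T" and "self_orthogonal C T" and "closed_under_summands C T"
    and "X \<in> XT C T"
  shows "(X \<in> Tcheck C T n \<longleftrightarrow> (\<forall>Y\<in>lperp C T. ext_vanishes C (Suc n) Y X))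
       \<and> ((\<forall>Y\<in>lperp C T. ext_vanishes C (Suc n) Y X) \<longleftrightarrow> (\<forall>Y\<in>XT C T. ext_vanishes C (Suc n) Y X))"
proof -
  interpret x: xcat C using assms(1) by unfold_locales
  obtain K Ti where K0: "K 0 = X"
    and KT: "\<forall>i. etri C (K i) (Ti i) (K (Suc i)) \<and> Ti i \<in> T \<and> K (Suc i) \<in> lperp C T"
    and Xob: "X \<in> Ob C" using assms(8) unfolding XT_def by blast
  have Kl: "K (Suc n) \<in> lperp C T" using KT by blast
  have A2B: "X \<in> Tcheck C T n \<Longrightarrow> \<forall>Y\<in>lperp C T. ext_vanishes C (Suc n) Y X"
    using x.partB by blast
  have B2A: "\<forall>Y\<in>lperp C T. ext_vanishes C (Suc n) Y X \<Longrightarrow> X \<in> Tcheck C T n"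
    using x.partC[OF K0 KT Xob assms(3) assms(5) assms(7)] Kl by blast
  have A2C: "X \<in> Tcheck C T n \<Longrightarrow> \<forall>Y\<in>XT C T. ext_vanishes C (Suc n) Y X"
    using x.partB x.partA[OF assms(3) assms(4) assms(5) assms(6)] by blast
  have KX: "K (Suc n) \<in> XT C T"
  proof -
    have "K (Suc n) \<in> Ob C" using Kl unfolding lperp_def by blast
    moreover have "\<forall>i. etri C (K (i + Suc n)) (Ti (i + Suc n)) (K (Suc i + Suc n)) \<and> Ti (i + Suc n) \<in> T
        \<and> K (Suc i + Suc n) \<in> lperp C T" using KT by simp
    ultimately show ?thesis unfolding XT_def
      by (intro CollectI conjI exI[of _ "\<lambda>i. K (i + Suc n)"] exI[of _ "\<lambda>i. Ti (i + Suc n)"]) auto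
  qed
  have C2A: "\<forall>Y\<in>XT C T. ext_vanishes C (Suc n) Y X \<Longrightarrow> X \<in> Tcheck C T n"
    using x.partC[OF K0 KT Xob assms(3) assms(5) assms(7)] KX by blast
  show ?thesis using A2B B2A A2C C2A by blast
qed

end
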